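(* Suppose $u=u_1\ldots u_n$ and $v=v_1\ldots v_n$ in $\mathbb{P}^*$ are rearrangements of each other and both have increasing/decreasing factorizations. For $1\le i\le n-1$ let $s_i(u)=u_{i+1}\ldots u_n$ and $s_i(v)=v_{i+1}\ldots v_n$. Then for all $1\le i\le n-1$, $$d_i(u)+\Sigma(s_i(u))=d_i(v)+\Sigma(s_i(v)).$$
   Context: $\mathbb{P}^*$ is the set of finite words over the positive integers; $\Sigma(w)$ is the sum of the letters of $w$. A word $u=u_1\ldots u_n$ has an increasing/decreasing factorization if $u_1\le\cdots\le u_n$ or there is $k<n$ with $u_1\le\cdots\le u_k>u_{k+1}\ge\cdots\ge u_n$. For $1\le i\le n-1$, $D^{(i)}(u)=\{n-i+j:1\le j\le i,\ u_j>u_{n-i+j}\}$ and $d_i(u)=\sum_{n-i+j\in D^{(i)}(u)}(u_j-u_{n-i+j})$. A rearrangement of $u$ is a word obtained by permuting its letters. *)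

theory Defs
  imports Main "HOL-Library.Multiset"
begin

text \<open>Words over the positive integers are lists of naturals with all letters positive.
  Letters are indexed from 1 as in the paper: letter w j = w ! (j - 1).\<close>

definition pos_word :: "nat list \<Rightarrow> bool" where
  "pos_word w \<longleftrightarrow> (\<forall>x\<in>set w. 0 < x)"

definition letter :: "nat list \<Rightarrow> nat \<Rightarrow> nat" where
  "letter w j = w ! (j - 1)"

definition wsum :: "nat list \<Rightarrow> nat" where
  "wsum w = sum_list w"

definition inc_dec_fact :: "nat list \<Rightarrow> bool" where
  "inc_dec_fact u \<longleftrightarrow>
     (let n = length u in
       (\<forall>j. 1 \<le> j \<and> j < n \<longrightarrow> letter u j \<le> letter u (j+1)) \<or>
       (\<exists>k. 1 \<le> k \<and> k < n \<and>
          (\<forall>j. 1 \<le> j \<and> j < k \<longrightarrow> letter u j \<le> letter u (j+1)) \<and>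
          letter u k > letter u (k+1) \<and>
          (\<forall>j. k+1 \<le> j \<and> j < n \<longrightarrow> letter u j \<ge> letter u (j+1))))"

definition Dset :: "nat \<Rightarrow> nat list \<Rightarrow> nat set" where
  "Dset i u = {length u - i + j | j. 1 \<le> j \<and> j \<le> i \<and> letter u j > letter u (length u - i + j)}"

definition dval :: "nat \<Rightarrow> nat list \<Rightarrow> int" where
  "dval i u = (\<Sum>p\<in>Dset i u. int (letter u (p - (length u - i))) - int (letter u p))"

definition suffix_s :: "nat \<Rightarrow> nat list \<Rightarrow> nat list" where
  "suffix_s i w = drop i w"

end

theory Submission
  imports Defs
begin

definition unimodal :: "nat list \<Rightarrow> bool" where
  "unimodal u \<longleftrightarrow> (\<exists>k. sorted (take k u) \<and> sorted (rev (drop k u)))"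

definition G :: "nat \<Rightarrow> nat list \<Rightarrow> int" where
  "G i u = sum_list (map (\<lambda>(a,b). int (max a b)) (zip (take i u) (drop (length u - i) u)))
     + int (sum_list (drop i u)) - int (sum_list (drop (length u - i) u))"

lemma sort_mset_eq: "mset xs = mset ys \<Longrightarrow> sort xs = sort ys"
  by (metis properties_for_sort mset_sort sorted_sort)

lemma unimodal_Cons: "unimodal (x # w) \<Longrightarrow> unimodal w"
  unfolding unimodal_def
proof -
  assume "\<exists>k. sorted (take k (x # w)) \<and> sorted (rev (drop k (x # w)))"
  then obtain k where k: "sorted (take k (x # w))" "sorted (rev (drop k (x # w)))" by blast
  show "\<exists>k. sorted (take k w) \<and> sorted (rev (drop k w))"
  proof (cases k)
    case 0
    then show ?thesis using k by (intro exI[of _ 0]) (auto simp: sorted_append)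
  next
    case (Suc k')
    then show ?thesis using k by (intro exI[of _ k']) auto
  qed
qed

lemma sorted_rev_append_last: "sorted (rev (xs @ [x])) \<Longrightarrow> sorted (rev xs)"
  by (simp add: sorted_append)

lemma unimodal_snoc: "unimodal (w @ [x]) \<Longrightarrow> unimodal w"
  unfolding unimodal_def
proof -
  assume "\<exists>k. sorted (take k (w @ [x])) \<and> sorted (rev (drop k (w @ [x])))"
  then obtain k where k: "sorted (take k (w @ [x]))" "sorted (rev (drop k (w @ [x])))" by blast
  show "\<exists>k. sorted (take k w) \<and> sorted (rev (drop k w))"
  proof (cases "k \<le> length w")
    case True
    then show ?thesis using k by (intro exI[of _ k]) (auto simp: sorted_append)
  next
    case False
    then show ?thesis using k by (intro exI[of _ k]) (auto simp: sorted_append)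
  qed
qed

lemma unimodal_min:
  assumes "unimodal u" "u \<noteq> []"
  shows "\<exists>x w. (u = x # w \<or> u = w @ [x]) \<and> (\<forall>y\<in>set w. x \<le> y)"
proof -
  obtain k where k: "sorted (take k u)" "sorted (rev (drop k u))"
    using assms(1) unfolding unimodal_def by blast
  define a where "a = take k u"
  define b where "b = drop k u"
  have u: "u = a @ b" unfolding a_def b_def by simp
  have sa: "sorted a" and sb: "sorted (rev b)" using k a_def b_def by auto
  show ?thesis
  proof (cases "a = []")
    case True
    then have ub: "u = b" using u by simp
    then obtain w x where bx: "b = w @ [x]" using assms(2) by (metis rev_exhaust)
    have "\<forall>y\<in>set w. x \<le> y" using sb bx by (simp add: sorted_append)
    then show ?thesis using ub bx by blast
  next
    case an: False
    show ?thesis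
    proof (cases "b = []")
      case True
      then have ua: "u = a" using u by simp
      then obtain x w where ax: "a = x # w" using an by (cases a) auto
      have "\<forall>y\<in>set w. x \<le> y" using sa ax by simp
      then show ?thesis using ua ax by blast
    next
      case bn: False
      obtain x w where ax: "a = x # w" using an by (cases a) auto
      obtain w' z where bz: "b = w' @ [z]" using bn by (metis rev_exhaust)
      have ha: "\<forall>y\<in>set a. x \<le> y" using sa ax by auto
      have hb: "\<forall>y\<in>set b. z \<le> y" using sb bz by (auto simp: sorted_append)
      show ?thesis
      proof (cases "x \<le> z")
        case True
        have "\<forall>y\<in>set (w @ b). x \<le> y" using ha hb True ax by auto
        moreover have "u = x # (w @ b)" using u ax by simp
        ultimately show ?thesis by blast
      next
        case False
        have "\<forall>y\<in>set (a @ w'). z \<le> y" using ha hb False bz by auto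
        moreover have "u = (a @ w') @ [z]" using u bz by simp
        ultimately show ?thesis by blast
      qed
    qed
  qed
qed

lemma int_sum_list: "int (sum_list xs) = sum_list (map int xs)"
  by (induction xs) auto

lemma G_full: "G (length u) u = 0"
proof -
  have "map (\<lambda>(a,b). int (max a b)) (zip u u) = map int u"
    by (induction u) auto
  then show ?thesis unfolding G_def by (simp add: int_sum_list)
qed

lemma G_zero: "G 0 u = int (sum_list u)"
  unfolding G_def by simp

lemma G_Cons:
  assumes "\<forall>y\<in>set w. x \<le> y" "1 \<le> i" "i < length w + 1"
  shows "G i (x # w) = G (i - 1) w"
proof -
  define m where "m = length w + 1 - i"
  have m1: "m \<ge> 1" and mw: "m - 1 < length w" using assms m_def by auto
  have lm: "length w - (i - 1) = m" using m_def assms by auto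
  have lu: "Suc (length w) - i = m" using m_def by simp
  have d1: "drop m (x # w) = w ! (m - 1) # drop m w"
    using m1 mw by (metis Cons_nth_drop_Suc Suc_diff_1 drop_Suc_Cons less_le_trans zero_less_one)
  have t1: "take i (x # w) = x # take (i - 1) w"
    using assms by (cases i) auto
  have dr: "drop i (x # w) = drop (i - 1) w" using assms by (cases i) auto
  have dm: "drop (m - 1) w = w ! (m - 1) # drop m w"
    using mw by (metis Cons_nth_drop_Suc Suc_diff_1 m1 less_le_trans zero_less_one)
  have mx: "max x (w ! (m - 1)) = w ! (m - 1)"
    using assms(1) mw by auto
  show ?thesis
    unfolding G_def
    using d1 t1 dr dm mx lm
    by (simp add: m_def[symmetric] lu)
qed

lemma G_snoc:
  assumes "\<forall>y\<in>set w. x \<le> y" "1 \<le> i" "i < length w + 1"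
  shows "G i (w @ [x]) = G (i - 1) w"
proof -
  define m where "m = length w + 1 - i"
  have m1: "m \<ge> 1" and mw: "m \<le> length w" and iw: "i - 1 < length w" using assms m_def by auto
  have lm: "length w - (i - 1) = m" using m_def assms by auto
  have lu: "length (w @ [x]) - i = m" using m_def by simp
  have t1: "take i (w @ [x]) = take (i - 1) w @ [w ! (i - 1)]"
  proof -
    have "take i (w @ [x]) = take i w" using assms by simp
    also have "i = Suc (i - 1)" using assms by simp
    then have "take i w = take (i - 1) w @ [w ! (i - 1)]"
      using iw by (metis take_Suc_conv_app_nth)
    finally show ?thesis .
  qed
  have d1: "drop m (w @ [x]) = drop m w @ [x]" using mw by simp
  have len: "length (take (i - 1) w) = length (drop m w)" using iw m_def assms by auto
  have dr: "drop i (w @ [x]) = drop i w @ [x]" using assms by simp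
  have dm: "drop (i - 1) w = w ! (i - 1) # drop i w"
    using iw assms by (metis Cons_nth_drop_Suc Suc_diff_1 less_le_trans zero_less_one)
  have mx: "max (w ! (i - 1)) x = w ! (i - 1)"
    using assms(1) nth_mem[OF iw] by (metis max.orderE max.commute)
  show ?thesis
    unfolding G_def lu t1 d1 dr lm dm
    using mx len by simp
qed

lemma sort_Cons_min: "\<forall>y\<in>set w. x \<le> y \<Longrightarrow> sort (x # w) = x # sort w"
  by (simp add: insort_is_Cons)

lemma G_sort: "unimodal u \<Longrightarrow> i \<le> length u \<Longrightarrow> G i u = int (sum_list (drop i (sort u)))"
proof (induction i arbitrary: u)
  case 0
  then show ?case by (simp add: G_zero sum_mset_sum_list[symmetric])
next
  case (Suc i)
  show ?case
  proof (cases "Suc i = length u")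
    case True
    then show ?thesis using G_full[of u] by simp
  next
    case False
    then have lt: "Suc i < length u" using Suc.prems by simp
    then have "u \<noteq> []" by auto
    then obtain x w where xw: "u = x # w \<or> u = w @ [x]" and mn: "\<forall>y\<in>set w. x \<le> y"
      using unimodal_min Suc.prems by blast
    have uw: "unimodal w" using xw Suc.prems unimodal_Cons unimodal_snoc by blast
    have lw: "length w + 1 = length u" using xw by auto
    have sw: "sort u = x # sort w"
    proof -
      have "mset u = mset (x # w)" using xw by auto
      then have "sort u = sort (x # w)" by (rule sort_mset_eq)
      then show ?thesis using sort_Cons_min[OF mn] by simp
    qed
    have "G (Suc i) u = G i w"
      using xw G_Cons[OF mn, of "Suc i"] G_snoc[OF mn, of "Suc i"] lt lw by auto
    also have "\<dots> = int (sum_list (drop i (sort w)))"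
      using Suc.IH[OF uw] lt lw by simp
    finally show ?thesis using sw by simp
  qed
qed

lemma incdec_unimodal: "inc_dec_fact u \<Longrightarrow> unimodal u"
  unfolding inc_dec_fact_def unimodal_def Let_def letter_def
proof (elim disjE exE conjE)
  assume h: "\<forall>j. 1 \<le> j \<and> j < length u \<longrightarrow> u ! (j - 1) \<le> u ! (j + 1 - 1)"
  have "sorted u"
    unfolding sorted_iff_nth_Suc
  proof (intro allI impI)
    fix i assume "Suc i < length u"
    then show "u ! i \<le> u ! Suc i" using h[rule_format, of "Suc i"] by simp
  qed
  then show "\<exists>k. sorted (take k u) \<and> sorted (rev (drop k u))"
    by (intro exI[of _ "length u"]) simp
next
  fix k
  assume k1: "1 \<le> k" and kn: "k < length u"
    and h1: "\<forall>j. 1 \<le> j \<and> j < k \<longrightarrow> u ! (j - 1) \<le> u ! (j + 1 - 1)"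
    and h2: "\<forall>j. k + 1 \<le> j \<and> j < length u \<longrightarrow> u ! (j + 1 - 1) \<le> u ! (j - 1)"
  have "sorted (take k u)"
    unfolding sorted_iff_nth_Suc
  proof (intro allI impI)
    fix i assume "Suc i < length (take k u)"
    then show "take k u ! i \<le> take k u ! Suc i" using h1[rule_format, of "Suc i"] by simp
  qed
  moreover have "sorted (rev (drop k u))"
    unfolding sorted_rev_iff_nth_Suc
  proof (intro allI impI)
    fix i assume "Suc i < length (drop k u)"
    then show "drop k u ! Suc i \<le> drop k u ! i" using h2[rule_format, of "k + Suc i"] by simp
  qed
  ultimately show "\<exists>k. sorted (take k u) \<and> sorted (rev (drop k u))" by blast
qed

lemma dval_G:
  assumes "1 \<le> i" "i \<le> length u"
  shows "dval i u + int (sum_list (drop i u)) = G i u"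
proof -
  define n where "n = length u"
  have a: "sum_list (map (\<lambda>(a,b). int (max a b)) (zip (take i u) (drop (n - i) u)))
        = (\<Sum>j<i. int (max (u ! j) (u ! (n - i + j))))"
    unfolding sum_list_sum_nth using assms n_def
    by (auto simp: lessThan_atLeast0 intro!: sum.cong)
  have b: "int (sum_list (drop (n - i) u)) = (\<Sum>j<i. int (u ! (n - i + j)))"
    unfolding int_sum_list sum_list_sum_nth using assms n_def
    by (auto simp: lessThan_atLeast0 intro!: sum.cong)
  define A where "A = {j. 1 \<le> j \<and> j \<le> i \<and> letter u j > letter u (n - i + j)}"
  have DA: "Dset i u = (\<lambda>j. n - i + j) ` A" unfolding Dset_def A_def n_def by auto
  have inj: "inj_on (\<lambda>j. n - i + j) A" by (auto simp: inj_on_def)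
  have "dval i u = (\<Sum>j\<in>A. int (letter u j) - int (letter u (n - i + j)))"
    unfolding dval_def DA sum.reindex[OF inj] n_def[symmetric] by simp
  also have "\<dots> = (\<Sum>j\<in>{1..i}. if letter u j > letter u (n - i + j)
                 then int (letter u j) - int (letter u (n - i + j)) else 0)"
    unfolding A_def by (simp add: sum.inter_filter[symmetric])
  also have "\<dots> = (\<Sum>j\<in>{1..i}. int (max (letter u j) (letter u (n - i + j))) - int (letter u (n - i + j)))"
    by (intro sum.cong) (auto simp: max_def)
  also have "\<dots> = (\<Sum>j<i. int (max (u ! j) (u ! (n - i + j))) - int (u ! (n - i + j)))"
  proof -
    have "{1..i} = Suc ` {..<i}" by (auto simp: image_iff) (metis Suc_pred' lessThan_iff less_eq_Suc_le diff_less_Suc le_less_trans not_less_eq_eq)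
    then show ?thesis by (simp add: sum.reindex letter_def)
  qed
  finally have c: "dval i u = (\<Sum>j<i. int (max (u ! j) (u ! (n - i + j))) - int (u ! (n - i + j)))" .
  show ?thesis unfolding G_def n_def[symmetric] a b c sum_subtractf by simp
qed

theorem lemma3:
  fixes u v :: "nat list"
  assumes "pos_word u" and "pos_word v"
    and "length u = n" and "length v = n"
    and "mset u = mset v"
    and "inc_dec_fact u" and "inc_dec_fact v"
  shows "\<forall>i. 1 \<le> i \<and> i \<le> n - 1 \<longrightarrow>
           dval i u + int (wsum (suffix_s i u)) = dval i v + int (wsum (suffix_s i v))"
proof (intro allI impI)
  fix i assume i: "1 \<le> i \<and> i \<le> n - 1"
  have "dval i u + int (wsum (suffix_s i u)) = G i u"
    unfolding wsum_def suffix_s_def using i assms by (intro dval_G) auto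
  also have "\<dots> = int (sum_list (drop i (sort u)))"
    using G_sort[OF incdec_unimodal[OF assms(6)]] i assms by auto
  also have "\<dots> = int (sum_list (drop i (sort v)))"
    using sort_mset_eq[OF assms(5)] by simp
  also have "\<dots> = G i v"
    using G_sort[OF incdec_unimodal[OF assms(7)]] i assms by auto
  also have "\<dots> = dval i v + int (wsum (suffix_s i v))"
    unfolding wsum_def suffix_s_def using i assms by (intro dval_G[symmetric]) auto
  finally show "dval i u + int (wsum (suffix_s i u)) = dval i v + int (wsum (suffix_s i v))" .
qed

end
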